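(* If a quadrilateral $q$ is $\frac{\pi}{12}$-near square and has two adjacent acute angles, then $q$ has a periodic billiard path.
   Context: A quadrilateral is cut by a diagonal into two triangles. Its parameters $(a_1,a_2,a_3,a_4)$ are the four angles that the diagonal makes with the four sides (the angles of the two triangles at the endpoints of the diagonal). For $\varepsilon>0$, the quadrilateral is $\varepsilon$-near square if $|a_i-\pi/4|<\varepsilon$ for all $i$. A billiard path is a straight-line trajectory inside the polygon that reflects off the sides with angle of incidence equal to angle of reflection. Trajectories hitting vertices are excluded. It is periodic if it repeats itself. *)

theory Defs
  imports "HOL-Analysis.Analysis"
begin

text \<open>Points of the plane are complex numbers.  A quadrilateral is given by its
vertices A, B, C, D in cyclic order; the diagonal used for the parameters is AC.\<close>

definition vangle :: "complex \<Rightarrow> complex \<Rightarrow> real" where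
  "vangle u v = arccos (inner u v / (norm u * norm v))"

definition cross2 :: "complex \<Rightarrow> complex \<Rightarrow> real" where
  "cross2 u v = Im (cnj u * v)"

definition diag_splits :: "complex \<Rightarrow> complex \<Rightarrow> complex \<Rightarrow> complex \<Rightarrow> bool" where
  "diag_splits A B C D \<longleftrightarrow> cross2 (C - A) (B - A) * cross2 (C - A) (D - A) < 0"

definition quad_params :: "complex \<Rightarrow> complex \<Rightarrow> complex \<Rightarrow> complex \<Rightarrow> real list" where
  "quad_params A B C D =
     [vangle (B - A) (C - A), vangle (D - A) (C - A),
      vangle (B - C) (A - C), vangle (D - C) (A - C)]"

definition near_square :: "real \<Rightarrow> complex \<Rightarrow> complex \<Rightarrow> complex \<Rightarrow> complex \<Rightarrow> bool" where
  "near_square \<epsilon> A B C D \<longleftrightarrow> diag_splits A B C D \<and>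
     (\<forall>a \<in> set (quad_params A B C D). \<bar>a - pi / 4\<bar> < \<epsilon>)"

text \<open>Interior angles of the quadrilateral at its vertices (the quadrilaterals
considered are convex, so each is the angle between the two adjacent sides).\<close>
definition quad_angles :: "complex \<Rightarrow> complex \<Rightarrow> complex \<Rightarrow> complex \<Rightarrow> real list" where
  "quad_angles A B C D =
     [vangle (D - A) (B - A), vangle (A - B) (C - B),
      vangle (B - C) (D - C), vangle (C - D) (A - D)]"

definition two_adjacent_acute :: "complex \<Rightarrow> complex \<Rightarrow> complex \<Rightarrow> complex \<Rightarrow> bool" where
  "two_adjacent_acute A B C D \<longleftrightarrow>
     (\<exists>i < 4. quad_angles A B C D ! i < pi / 2 \<and> quad_angles A B C D ! ((i + 1) mod 4) < pi / 2)"

definition quad_region :: "complex \<Rightarrow> complex \<Rightarrow> complex \<Rightarrow> complex \<Rightarrow> complex set" where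
  "quad_region A B C D = convex hull {A, B, C} \<union> convex hull {A, C, D}"

definition quad_sides :: "complex \<Rightarrow> complex \<Rightarrow> complex \<Rightarrow> complex \<Rightarrow> (complex \<times> complex) set" where
  "quad_sides A B C D = {(A, B), (B, C), (C, D), (D, A)}"

definition reflect_dir :: "complex \<Rightarrow> complex \<Rightarrow> complex" where
  "reflect_dir u v = (2 * inner v u / inner u u) *\<^sub>R u - v"

text \<open>A periodic billiard path, given by its bounce points p 0, p 1, ... with
p (i + n) = p i.\<close>
definition periodic_billiard_path ::
  "complex \<Rightarrow> complex \<Rightarrow> complex \<Rightarrow> complex \<Rightarrow> (nat \<Rightarrow> complex) \<Rightarrow> nat \<Rightarrow> bool" where
  "periodic_billiard_path A B C D p n \<longleftrightarrow> n > 0 \<and>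
     (\<forall>i. p (i + n) = p i) \<and>
     (\<forall>i. p i \<noteq> p (Suc i) \<and>
          open_segment (p i) (p (Suc i)) \<subseteq> interior (quad_region A B C D)) \<and>
     (\<forall>i. \<exists>(X, Y) \<in> quad_sides A B C D. p (Suc i) \<in> open_segment X Y \<and>
          (\<exists>c > 0. p (Suc (Suc i)) - p (Suc i) = c *\<^sub>R reflect_dir (Y - X) (p (Suc i) - p i)))"

definition has_periodic_billiard_path :: "complex \<Rightarrow> complex \<Rightarrow> complex \<Rightarrow> complex \<Rightarrow> bool" where
  "has_periodic_billiard_path A B C D \<longleftrightarrow> (\<exists>p n. periodic_billiard_path A B C D p n)"

end

theory Submission
  imports Defs
begin

definition foot :: "complex \<Rightarrow> complex \<Rightarrow> complex \<Rightarrow> complex" where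
  "foot P u Z = P + (inner (Z - P) u / inner u u) *\<^sub>R u"

lemma cross2_comp: "cross2 u v = Re u * Im v - Im u * Re v"
  by (simp add: cross2_def)

lemma inner_comp: "inner u v = Re u * Re v + Im u * Im v"
  by (simp add: inner_complex_def)

lemma inner_scale: "inner (w*x) (w*y) = (cmod w)^2 * inner x y"
  unfolding inner_comp cmod_power2 by (simp add: algebra_simps power2_eq_square)

lemma cross_scale: "cross2 (w*x) (w*y) = (cmod w)^2 * cross2 x y"
  unfolding cross2_comp cmod_power2 by (simp add: algebra_simps power2_eq_square)

lemma reflect_scale: "w \<noteq> 0 \<Longrightarrow> reflect_dir w (w * v) = w * reflect_dir 1 v"
proof -
  assume w: "w \<noteq> 0"
  have "inner (w * v) w = (cmod w)^2 * inner v 1" using inner_scale[of w v 1] by simp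
  moreover have "inner w w = (cmod w)^2" using inner_scale[of w 1 1] by (simp add: inner_comp)
  moreover have "cmod w \<noteq> 0" using w by simp
  ultimately show ?thesis unfolding reflect_dir_def
    by (simp add: complex_eq_iff inner_comp)
qed

lemma reflect_smult: "s \<noteq> 0 \<Longrightarrow> reflect_dir (s *\<^sub>R u) v = reflect_dir u v"
proof -
  assume s: "s \<noteq> 0"
  have 1: "inner v (s *\<^sub>R u) = s * inner v u" by simp
  have 2: "inner (s *\<^sub>R u) (s *\<^sub>R u) = s * s * inner u u" by simp
  have 3: "2 * (s * a) / (s * s * b) * s = 2 * a / b" for a b using s by simp
  show ?thesis unfolding reflect_dir_def 1 2 scaleR_scaleR 3 ..
qed

lemma foot_scale: "w \<noteq> 0 \<Longrightarrow> foot (X + w*P) (w*u) (X + w*Z) = X + w * foot P u Z"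
proof -
  assume w: "w \<noteq> 0"
  have "X + w*Z - (X + w*P) = w * (Z - P)" by (simp add: algebra_simps)
  hence 1: "inner (X + w*Z - (X + w*P)) (w*u) = (cmod w)^2 * inner (Z-P) u"
    by (simp add: inner_scale)
  have 2: "inner (w*u) (w*u) = (cmod w)^2 * inner u u" by (simp add: inner_scale)
  have 3: "(cmod w)^2 * a / ((cmod w)^2 * b) = a / b" for a b using w by simp
  show ?thesis unfolding foot_def 1 2 3
    by (simp add: distrib_left)
qed

lemma foot_line: "s \<noteq> 0 \<Longrightarrow> foot (P + r *\<^sub>R u) (s *\<^sub>R u) Z = foot P u Z"
proof -
  assume s: "s \<noteq> 0"
  show ?thesis
  proof (cases "u = 0")
    case True thus ?thesis by (simp add: foot_def)
  next
    case False
    hence uu: "inner u u \<noteq> 0" by simp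
    have 1: "inner (Z - (P + r *\<^sub>R u)) (s *\<^sub>R u) = s * (inner (Z - P) u - r * inner u u)"
      by (simp add: inner_diff_left inner_add_left algebra_simps)
    have 2: "inner (s *\<^sub>R u) (s *\<^sub>R u) = s * s * inner u u" by simp
    have 3: "s * (a - r * inner u u) / (s * s * inner u u) * s = a / inner u u - r" for a
      using s uu by (simp add: field_simps)
    show ?thesis unfolding foot_def 1 2 scaleR_scaleR 3
      by (simp add: scaleR_diff_left)
  qed
qed


lemma reflect_one: "reflect_dir 1 v = cnj v"
  unfolding reflect_dir_def by (simp add: complex_eq_iff inner_comp)

lemma orth_frame:
  fixes e :: complex
  assumes y: "Im e \<noteq> 0" and x0: "Re e \<noteq> 0"
  shows "foot 1 (e - 1) 0 - foot 0 1 e =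
    ((1 - Re e) * (cmod e)^2 / ((cmod (e-1))^2 * Re e)) *\<^sub>R reflect_dir 1 (foot 0 1 e - foot 0 e 1)"
proof -
  obtain x z where e: "e = Complex x z" by (cases e)
  have z: "z \<noteq> 0" and x: "x \<noteq> 0" using y x0 e by simp_all
  define N where "N = x*x + z*z"
  define M where "M = (x-1)*(x-1) + z*z"
  have N: "N \<noteq> 0" using z unfolding N_def by (simp add: add_nonneg_eq_0_iff)
  have M: "M \<noteq> 0" using z unfolding M_def by (simp add: add_nonneg_eq_0_iff)
  have c1: "(cmod e)^2 = N" unfolding e cmod_power2 N_def by (simp add: power2_eq_square)
  have c2: "(cmod (e-1))^2 = M" unfolding e cmod_power2 M_def by (simp add: power2_eq_square)
  have i1: "inner (0 - 1) (e - 1) = 1 - x" "inner (e-1) (e-1) = M"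
    unfolding e M_def by (simp_all add: inner_comp)
  have i2: "inner (e - 0) 1 = x" "inner (1::complex) 1 = 1" "inner (1 - 0) e = x" "inner e e = N"
    unfolding e N_def by (simp_all add: inner_comp)
  have f1: "foot 1 (e - 1) 0 - foot 0 1 e = ((1-x)/M) *\<^sub>R Complex (x*x - x + z*z) z"
    unfolding foot_def i1 i2 using M
    apply (simp add: complex_eq_iff e field_simps)
    apply (simp add: M_def algebra_simps)
    done
  have f2: "foot 0 1 e - foot 0 e 1 = (x/N) *\<^sub>R Complex (x*x - x + z*z) (-z)"
    unfolding foot_def i1 i2 using N
    apply (simp add: complex_eq_iff e field_simps)
    apply (simp add: N_def algebra_simps)
    done
  show ?thesis
    unfolding c1 c2 f1 f2 reflect_one using N M x
    by (simp add: complex_eq_iff e)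
qed


lemma orth:
  fixes X Y Z :: complex
  assumes cr: "cross2 (Y-X) (Z-X) \<noteq> 0" and i1: "0 < inner (Z-X) (Y-X)" and i2: "0 < inner (Z-Y) (X-Y)"
  shows "\<exists>c>0. foot Y (Z-Y) X - foot X (Y-X) Z = c *\<^sub>R reflect_dir (Y-X) (foot X (Y-X) Z - foot X (Z-X) Y)"
proof -
  define w where "w = Y - X"
  have w: "w \<noteq> 0" using cr unfolding w_def by (auto simp: cross2_def)
  define e where "e = (Z - X) / w"
  have Z: "Z = X + w * e" and Y: "Y = X + w * 1" and X: "X = X + w * 0"
    using w unfolding e_def w_def by simp_all
  have "cross2 (Y-X) (Z-X) = (cmod w)^2 * cross2 1 e"
    using cross_scale[of w 1 e] Z w_def by simp
  hence ye: "Im e \<noteq> 0" using cr w by (simp add: cross2_comp)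
  have "inner (Z-X) (Y-X) = (cmod w)^2 * inner e 1"
    using inner_scale[of w e 1] Z w_def by simp
  hence xe: "0 < Re e" using i1 w by (simp add: inner_comp zero_less_mult_iff)
  have "Z - Y = w * (e - 1)" "X - Y = w * (0 - 1)" using Z Y by (simp_all add: algebra_simps)
  hence "inner (Z-Y) (X-Y) = (cmod w)^2 * inner (e - 1) (0 - 1)"
    using inner_scale[of w "e-1" "0-1"] by simp
  hence xe1: "Re e < 1" using i2 w by (simp add: inner_comp zero_less_mult_iff)
  have e0: "e \<noteq> 0" "e - 1 \<noteq> 0" using ye by auto
  define c where "c = (1 - Re e) * (cmod e)^2 / ((cmod (e-1))^2 * Re e)"
  have cpos: "c > 0" unfolding c_def using xe xe1 e0 by simp
  have F1: "foot Y (Z-Y) X = X + w * foot 1 (e-1) 0"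
  proof -
    have "foot Y (Z-Y) X = foot (X + w*1) (w*(e-1)) (X + w*0)"
      using Z Y by (simp only: mult_1_right mult_zero_right add_0_right, simp add: algebra_simps)
    also have "\<dots> = X + w * foot 1 (e-1) 0" by (rule foot_scale[OF w])
    finally show ?thesis .
  qed
  have F2: "foot X (Y-X) Z = X + w * foot 0 1 e"
  proof -
    have "foot X (Y-X) Z = foot (X + w*0) (w*1) (X + w*e)"
      using Z Y by (simp only: mult_1_right mult_zero_right add_0_right, simp add: algebra_simps)
    also have "\<dots> = X + w * foot 0 1 e" by (rule foot_scale[OF w])
    finally show ?thesis .
  qed
  have F3: "foot X (Z-X) Y = X + w * foot 0 e 1"
  proof -
    have "foot X (Z-X) Y = foot (X + w*0) (w*e) (X + w*1)"
      using Z Y by (simp only: mult_1_right mult_zero_right add_0_right, simp add: algebra_simps)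
    also have "\<dots> = X + w * foot 0 e 1" by (rule foot_scale[OF w])
    finally show ?thesis .
  qed
  have "foot Y (Z-Y) X - foot X (Y-X) Z = w * (foot 1 (e - 1) 0 - foot 0 1 e)"
    unfolding F1 F2 by (simp add: algebra_simps)
  also have "\<dots> = w * (c *\<^sub>R reflect_dir 1 (foot 0 1 e - foot 0 e 1))"
    using orth_frame[OF ye] xe unfolding c_def by simp
  also have "\<dots> = c *\<^sub>R (w * reflect_dir 1 (foot 0 1 e - foot 0 e 1))"
    by (simp add: scaleR_conv_of_real algebra_simps)
  also have "\<dots> = c *\<^sub>R reflect_dir w (w * (foot 0 1 e - foot 0 e 1))"
    using reflect_scale[OF w] by simp
  also have "w * (foot 0 1 e - foot 0 e 1) = foot X (Y-X) Z - foot X (Z-X) Y"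
    unfolding F2 F3 by (simp add: algebra_simps)
  finally show ?thesis using cpos unfolding w_def by blast
qed


definition hp :: "real \<Rightarrow> complex \<Rightarrow> complex \<Rightarrow> complex \<Rightarrow> real" where
  "hp \<sigma> X Y z = \<sigma> * cross2 (Y - X) (z - X)"

lemma open_hp: "open {z. 0 < hp \<sigma> X Y z}"
  unfolding hp_def cross2_comp
  by (rule open_Collect_less) (intro continuous_intros)+

lemma tri_hull:
  fixes P Q R z :: complex
  assumes d: "0 < \<sigma> * cross2 (Q-P) (R-P)"
    and a: "0 \<le> \<sigma> * cross2 (R-Q) (z-Q)" and b: "0 \<le> \<sigma> * cross2 (P-R) (z-R)"
    and c: "0 \<le> \<sigma> * cross2 (Q-P) (z-P)"
  shows "z \<in> convex hull {P, Q, R}"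
proof -
  define \<Delta> where "\<Delta> = cross2 (Q-P) (R-P)"
  have D: "\<Delta> \<noteq> 0" using d unfolding \<Delta>_def by auto
  define u where "u = cross2 (R-Q) (z-Q) / \<Delta>"
  define v where "v = cross2 (P-R) (z-R) / \<Delta>"
  define w where "w = cross2 (Q-P) (z-P) / \<Delta>"
  have pos: "0 \<le> x / \<Delta>" if "0 \<le> \<sigma> * x" for x
  proof -
    have "x / \<Delta> = (\<sigma> * x) / (\<sigma> * \<Delta>)" using d unfolding \<Delta>_def by auto
    moreover have "0 \<le> (\<sigma> * x) / (\<sigma> * \<Delta>)" using that d unfolding \<Delta>_def
      by (intro divide_nonneg_pos)
    ultimately show ?thesis by simp
  qed
  have "0 \<le> u" "0 \<le> v" "0 \<le> w" unfolding u_def v_def w_def using pos a b c by auto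
  moreover have "u + v + w = 1"
    unfolding u_def v_def w_def using D
    apply (simp add: field_simps)
    apply (simp add: \<Delta>_def cross2_comp algebra_simps)
    done
  moreover have "z = u *\<^sub>R P + v *\<^sub>R Q + w *\<^sub>R R"
    unfolding u_def v_def w_def using D
    apply (simp add: complex_eq_iff field_simps)
    apply (simp add: \<Delta>_def cross2_comp algebra_simps)
    done
  ultimately show ?thesis unfolding convex_hull_3 by blast
qed

definition qin :: "real \<Rightarrow> complex \<Rightarrow> complex \<Rightarrow> complex \<Rightarrow> complex \<Rightarrow> complex set" where
  "qin \<sigma> A B C D = {z. 0 < hp \<sigma> A B z \<and> 0 < hp \<sigma> B C z \<and> 0 < hp \<sigma> C D z \<and> 0 < hp \<sigma> D A z}"

lemma qin_interior:
  assumes c1: "0 < \<sigma> * cross2 (B-A) (C-A)" and c8: "0 < \<sigma> * cross2 (A-D) (C-D)"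
  shows "qin \<sigma> A B C D \<subseteq> interior (quad_region A B C D)"
proof (rule interior_maximal)
  have "qin \<sigma> A B C D = {z. 0 < hp \<sigma> A B z} \<inter> {z. 0 < hp \<sigma> B C z} \<inter> {z. 0 < hp \<sigma> C D z} \<inter> {z. 0 < hp \<sigma> D A z}"
    unfolding qin_def by auto
  thus "open (qin \<sigma> A B C D)" using open_hp by (metis open_Int)
  show "qin \<sigma> A B C D \<subseteq> quad_region A B C D"
  proof
    fix z assume z: "z \<in> qin \<sigma> A B C D"
    hence h: "0 < hp \<sigma> A B z" "0 < hp \<sigma> B C z" "0 < hp \<sigma> C D z" "0 < hp \<sigma> D A z"
      unfolding qin_def by auto
    show "z \<in> quad_region A B C D"
    proof (cases "\<sigma> * cross2 (C-A) (z-A) \<le> 0")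
      case True
      have "cross2 (A-C) (z-C) = - cross2 (C-A) (z-A)" by (simp add: cross2_comp algebra_simps)
      hence "z \<in> convex hull {A, B, C}"
        using tri_hull[OF c1, of z] h True unfolding hp_def by simp
      thus ?thesis unfolding quad_region_def by auto
    next
      case False
      have "cross2 (A-D) (C-D) = cross2 (C-A) (D-A)" by (simp add: cross2_comp algebra_simps)
      hence "z \<in> convex hull {A, C, D}"
        apply -
        apply (rule tri_hull[of \<sigma>])
        using c8 h False unfolding hp_def by auto
      thus ?thesis unfolding quad_region_def by auto
    qed
  qed
qed


lemma hp_affine: "hp \<sigma> X Y ((1-u) *\<^sub>R p + u *\<^sub>R q) = (1-u) * hp \<sigma> X Y p + u * hp \<sigma> X Y q"
  unfolding hp_def cross2_comp by (simp add: algebra_simps)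

lemma hp_X: "hp \<sigma> X Y X = 0" and hp_Y: "hp \<sigma> X Y Y = 0"
  unfolding hp_def cross2_comp by (simp_all add: algebra_simps)

lemma pos_comb: "0 \<le> (a::real) \<Longrightarrow> 0 \<le> b \<Longrightarrow> 0 < a + b \<Longrightarrow> 0 < u \<Longrightarrow> u < 1 \<Longrightarrow> 0 < (1-u)*a + u*b"
proof -
  assume h: "0 \<le> a" "0 \<le> b" "0 < a + b" "0 < u" "u < 1"
  show ?thesis
  proof (cases "0 < a")
    case True
    have "0 < (1-u)*a" using True h by simp
    moreover have "0 \<le> u*b" using h by simp
    ultimately show ?thesis by linarith
  next
    case False
    hence "0 < b" using h by linarith
    hence "0 < u*b" using h by simp
    moreover have "0 \<le> (1-u)*a" using h by simp
    ultimately show ?thesis by linarith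
  qed
qed

lemma hp_seg_pos:
  assumes "z \<in> open_segment p q" "0 \<le> hp \<sigma> X Y p" "0 \<le> hp \<sigma> X Y q" "0 < hp \<sigma> X Y p + hp \<sigma> X Y q"
  shows "0 < hp \<sigma> X Y z"
proof -
  obtain u where u: "0 < u" "u < 1" "z = (1 - u) *\<^sub>R p + u *\<^sub>R q" using assms(1) unfolding in_segment by auto
  show ?thesis unfolding u(3) hp_affine using pos_comb assms(2-4) u(1,2) by blast
qed

lemma seg_qin:
  assumes "\<And>X Y. (X,Y) \<in> {(A,B),(B,C),(C,D),(D,A)} \<Longrightarrow>
     0 \<le> hp \<sigma> X Y p \<and> 0 \<le> hp \<sigma> X Y q \<and> 0 < hp \<sigma> X Y p + hp \<sigma> X Y q"
  shows "open_segment p q \<subseteq> qin \<sigma> A B C D"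
  unfolding qin_def using hp_seg_pos assms by blast

lemma foot_conv: "foot P u Z = (1 - inner (Z-P) u / inner u u) *\<^sub>R P + (inner (Z-P) u / inner u u) *\<^sub>R (P + u)"
  unfolding foot_def by (simp add: algebra_simps)

lemma foot_in_seg:
  assumes "0 < inner (Z-P) u" "inner (Z-P) u < inner u u"
  shows "foot P u Z \<in> open_segment P (P + u)"
proof -
  have u: "u \<noteq> 0" using assms by auto
  have "0 < inner u u" using u by simp
  hence "0 < inner (Z-P) u / inner u u" "inner (Z-P) u / inner u u < 1"
    using assms by (simp_all add: field_simps)
  thus ?thesis unfolding in_segment foot_conv using u by auto
qed

lemma mod3_cases:
  fixes i :: nat
  shows "(i mod 3 = 0 \<and> Suc i mod 3 = 1 \<and> Suc (Suc i) mod 3 = 2) \<or>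
         (i mod 3 = 1 \<and> Suc i mod 3 = 2 \<and> Suc (Suc i) mod 3 = 0) \<or>
         (i mod 3 = 2 \<and> Suc i mod 3 = 0 \<and> Suc (Suc i) mod 3 = 1)"
  by presburger


lemma foot_sc: "s \<noteq> 0 \<Longrightarrow> foot P (s *\<^sub>R u) Z = foot P u Z"
  using foot_line[of s P 0 u Z] by simp

lemma cross2_scaleR [simp]: "cross2 u (t *\<^sub>R v) = t * cross2 u v" "cross2 (t *\<^sub>R u) v = t * cross2 u v"
  by (simp_all add: cross2_comp algebra_simps)

lemma orbit:
  fixes A B C D :: complex and \<sigma> :: real
  assumes c1: "0 < \<sigma> * cross2 (B-A) (C-A)" and c2: "0 < \<sigma> * cross2 (B-A) (D-A)"
    and c3: "0 < \<sigma> * cross2 (C-B) (D-B)" and c4: "0 < \<sigma> * cross2 (C-B) (A-B)"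
    and c5: "0 < \<sigma> * cross2 (D-C) (A-C)" and c6: "0 < \<sigma> * cross2 (D-C) (B-C)"
    and c7: "0 < \<sigma> * cross2 (A-D) (B-D)" and c8: "0 < \<sigma> * cross2 (A-D) (C-D)"
    and iA: "0 < inner (D-A) (B-A)" and iB: "0 < inner (A-B) (C-B)"
    and iC: "0 < inner (A-C) (B-C)" and iD: "0 < inner (B-D) (A-D)"
    and tpos: "0 < cross2 (B-A) (C-B) / cross2 (D-A) (C-B)"
    and spos: "0 < cross2 (A-B) (D-A) / cross2 (C-B) (D-A)"
    and iE: "0 < inner (D-A) (C-B)"
  shows "has_periodic_billiard_path A B C D"
proof -
  define t where "t = cross2 (B-A) (C-B) / cross2 (D-A) (C-B)"
  define s where "s = cross2 (A-B) (D-A) / cross2 (C-B) (D-A)"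
  have k: "cross2 (D-A) (C-B) \<noteq> 0" using tpos by auto
  have k': "cross2 (C-B) (D-A) \<noteq> 0" using spos by auto
  have tp: "0 < t" and sp: "0 < s" using tpos spos unfolding t_def s_def by auto
  define E where "E = A + t *\<^sub>R (D-A)"
  have E2: "E = B + s *\<^sub>R (C-B)"
  proof -
    define u where "u = D - A"
    define v where "v = C - B"
    define w where "w = A - B"
    have idn: "cross2 u v *\<^sub>R w + cross2 v w *\<^sub>R u + cross2 w u *\<^sub>R v = 0"
      by (simp add: complex_eq_iff cross2_comp algebra_simps)
    have kk: "cross2 u v \<noteq> 0" using k unfolding u_def v_def .
    have t': "t = cross2 v w / cross2 u v" unfolding t_def u_def v_def w_def
      by (simp add: cross2_comp algebra_simps)
    have vu: "cross2 v u = - cross2 u v" by (simp add: cross2_comp)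
    have s': "s = - cross2 w u / cross2 u v" unfolding s_def u_def[symmetric] v_def[symmetric] w_def[symmetric] vu
      by simp
    have "cross2 u v *\<^sub>R (E - B - s *\<^sub>R (C-B)) = cross2 u v *\<^sub>R w + cross2 v w *\<^sub>R u + cross2 w u *\<^sub>R v"
      unfolding E_def t' s' using kk unfolding u_def[symmetric] v_def[symmetric] w_def[symmetric]
      by (simp add: algebra_simps u_def v_def w_def)
    hence "cross2 u v *\<^sub>R (E - B - s *\<^sub>R (C-B)) = 0" using idn by simp
    hence "E - B - s *\<^sub>R (C-B) = 0" using kk by simp
    thus ?thesis by (simp add: algebra_simps)
  qed
  have EA: "E - A = t *\<^sub>R (D-A)" unfolding E_def by simp
  have EB: "E - B = s *\<^sub>R (C-B)" using E2 by simp
  define F1 where "F1 = foot A (D-A) B"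
  define F2 where "F2 = foot B (C-B) A"
  define H where "H = foot A (B-A) E"
  have F1seg: "F1 \<in> open_segment A D"
  proof -
    have "0 < inner (B-A) (D-A)" using iA by (simp add: inner_commute)
    moreover have "inner (B-A) (D-A) < inner (D-A) (D-A)"
      using iD by (simp add: inner_comp algebra_simps)
    ultimately show ?thesis using foot_in_seg[of B A "D-A"] unfolding F1_def by simp
  qed
  have F2seg: "F2 \<in> open_segment B C"
  proof -
    have "inner (A-B) (C-B) < inner (C-B) (C-B)"
      using iC by (simp add: inner_comp algebra_simps)
    thus ?thesis using iB foot_in_seg[of A B "C-B"] unfolding F2_def by simp
  qed
  have iEA: "0 < inner (E-A) (B-A)" unfolding EA using tp iA by (simp add: inner_commute)
  have iEB: "0 < inner (E-B) (A-B)" unfolding EB using sp iB by (simp add: inner_commute)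
  have Hseg: "H \<in> open_segment A B"
  proof -
    have "inner (E-A) (B-A) < inner (B-A) (B-A)"
      using iEB by (simp add: inner_comp algebra_simps)
    thus ?thesis using iEA foot_in_seg[of E A "B-A"] unfolding H_def by simp
  qed
  obtain l1 where l1: "0 < l1" "l1 < 1" "F1 = (1 - l1) *\<^sub>R A + l1 *\<^sub>R D"
    using F1seg unfolding in_segment by auto
  obtain l2 where l2: "0 < l2" "l2 < 1" "F2 = (1 - l2) *\<^sub>R B + l2 *\<^sub>R C"
    using F2seg unfolding in_segment by auto
  obtain l3 where l3: "0 < l3" "l3 < 1" "H = (1 - l3) *\<^sub>R A + l3 *\<^sub>R B"
    using Hseg unfolding in_segment by auto
  have v: "0 < hp \<sigma> A B C" "0 < hp \<sigma> A B D" "0 < hp \<sigma> B C D" "0 < hp \<sigma> B C A"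
    "0 < hp \<sigma> C D A" "0 < hp \<sigma> C D B" "0 < hp \<sigma> D A B" "0 < hp \<sigma> D A C"
    using c1 c2 c3 c4 c5 c6 c7 c8 unfolding hp_def by auto
  have z: "hp \<sigma> X Y X = 0" "hp \<sigma> X Y Y = 0" for X Y by (simp_all add: hp_X hp_Y)
  have l1': "0 < 1 - l1" and l2': "0 < 1 - l2" and l3': "0 < 1 - l3" using l1 l2 l3 by simp_all
  have hH: "hp \<sigma> A B H = 0" "0 < hp \<sigma> B C H" "0 < hp \<sigma> C D H" "0 < hp \<sigma> D A H"
    unfolding l3(3) hp_affine z using v l3 l3' by (simp_all add: add_pos_pos)
  have hF2: "0 < hp \<sigma> A B F2" "hp \<sigma> B C F2 = 0" "0 < hp \<sigma> C D F2" "0 < hp \<sigma> D A F2"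
    unfolding l2(3) hp_affine z using v l2 l2' by (simp_all add: add_pos_pos)
  have hF1: "0 < hp \<sigma> A B F1" "0 < hp \<sigma> B C F1" "0 < hp \<sigma> C D F1" "hp \<sigma> D A F1 = 0"
    unfolding l1(3) hp_affine z using v l1 l1' by (simp_all add: add_pos_pos)
  have int: "open_segment H F2 \<subseteq> interior (quad_region A B C D)"
    "open_segment F2 F1 \<subseteq> interior (quad_region A B C D)"
    "open_segment F1 H \<subseteq> interior (quad_region A B C D)"
  proof -
    have Q: "qin \<sigma> A B C D \<subseteq> interior (quad_region A B C D)"
      by (rule qin_interior[OF c1 c8])
    have "open_segment H F2 \<subseteq> qin \<sigma> A B C D"
      by (rule seg_qin) (use hH hF2 in auto)
    thus "open_segment H F2 \<subseteq> interior (quad_region A B C D)" using Q by blast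
    have "open_segment F2 F1 \<subseteq> qin \<sigma> A B C D"
      by (rule seg_qin) (use hF1 hF2 in auto)
    thus "open_segment F2 F1 \<subseteq> interior (quad_region A B C D)" using Q by blast
    have "open_segment F1 H \<subseteq> qin \<sigma> A B C D"
      by (rule seg_qin) (use hH hF1 in auto)
    thus "open_segment F1 H \<subseteq> interior (quad_region A B C D)" using Q by blast
  qed
  have ne: "H \<noteq> F2" "F2 \<noteq> F1" "F1 \<noteq> H" using hH hF1 hF2 by auto
  have tn: "t \<noteq> 0" and sn: "s \<noteq> 0" using tp sp by auto
  have cr: "cross2 (B-A) (D-A) \<noteq> 0" "cross2 (C-B) (A-B) \<noteq> 0" using c2 c4 by auto
  have fE1: "foot B (E-B) A = F2" unfolding EB F2_def using foot_sc[OF sn] by simp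
  have fE2: "foot A (E-A) B = F1" unfolding EA F1_def using foot_sc[OF tn] by simp
  have fE3: "foot E (A-E) B = F1"
  proof -
    have "foot E (A-E) B = foot (A + t *\<^sub>R (D-A)) ((-t) *\<^sub>R (D-A)) B"
      unfolding E_def by (simp add: algebra_simps)
    also have "\<dots> = F1" unfolding F1_def by (rule foot_line) (use tn in simp)
    finally show ?thesis .
  qed
  have fE4: "foot E (B-E) A = F2"
  proof -
    have "foot E (B-E) A = foot (B + s *\<^sub>R (C-B)) ((-s) *\<^sub>R (C-B)) A"
      unfolding E2 by (simp add: algebra_simps)
    also have "\<dots> = F2" unfolding F2_def by (rule foot_line) (use sn in simp)
    finally show ?thesis .
  qed
  have fE5: "foot B (A-B) E = H"
  proof -
    have "foot B (A-B) E = foot (A + 1 *\<^sub>R (B-A)) ((-1) *\<^sub>R (B-A)) E"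
      by (simp add: algebra_simps)
    also have "\<dots> = H" unfolding H_def by (rule foot_line) simp
    finally show ?thesis .
  qed
  have R1: "\<exists>c>0. F2 - H = c *\<^sub>R reflect_dir (B-A) (H - F1)"
  proof -
    have "cross2 (B-A) (E-A) \<noteq> 0" unfolding EA using cr tn by simp
    from orth[OF this iEA iEB] show ?thesis unfolding fE1 fE2 H_def[symmetric] .
  qed
  have R2: "\<exists>c>0. F1 - F2 = c *\<^sub>R reflect_dir (C-B) (F2 - H)"
  proof -
    have a: "cross2 (E-B) (A-B) \<noteq> 0" unfolding EB using cr sn by simp
    have b: "0 < inner (A-B) (E-B)" using iEB by (simp add: inner_commute)
    have "A - E = (-t) *\<^sub>R (D-A)" "B - E = (-s) *\<^sub>R (C-B)" using EA EB by (simp_all add: algebra_simps)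
    hence c: "0 < inner (A-E) (B-E)" using tp sp iE by simp
    have d: "reflect_dir (E-B) = reflect_dir (C-B)" unfolding EB using sn by (simp add: reflect_smult fun_eq_iff)
    from orth[OF a b c] show ?thesis unfolding fE3 fE1 fE5 d .
  qed
  have R3: "\<exists>c>0. H - F1 = c *\<^sub>R reflect_dir (A-D) (F1 - F2)"
  proof -
    have AE: "A - E = t *\<^sub>R (A-D)" using EA by (simp add: algebra_simps)
    have BE: "B - E = (B - A) + t *\<^sub>R (A-D)" using AE by (simp add: algebra_simps)
    have "cross2 (A-E) (B-E) = t * cross2 (B-A) (D-A)"
      unfolding BE AE by (simp add: cross2_comp algebra_simps)
    hence a: "cross2 (A-E) (B-E) \<noteq> 0" using cr tn by simp
    have "A - E = (-t) *\<^sub>R (D-A)" "B - E = (-s) *\<^sub>R (C-B)" using EA EB by (simp_all add: algebra_simps)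
    hence b: "0 < inner (B-E) (A-E)" using tp sp iE by (simp add: inner_commute)
    have c: "0 < inner (B-A) (E-A)" using iEA by (simp add: inner_commute)
    have d: "reflect_dir (A-E) = reflect_dir (A-D)" unfolding AE using tn by (simp add: reflect_smult fun_eq_iff)
    from orth[OF a b c] show ?thesis unfolding fE3 fE4 H_def[symmetric] d .
  qed
  define p where "p = (\<lambda>i::nat. if i mod 3 = 0 then H else if i mod 3 = 1 then F2 else F1)"
  have "periodic_billiard_path A B C D p 3"
    unfolding periodic_billiard_path_def
  proof (intro conjI allI)
    show "0 < (3::nat)" by simp
    fix i :: nat
    show "p (i + 3) = p i" unfolding p_def by simp
    show "p i \<noteq> p (Suc i)" using mod3_cases[of i] ne unfolding p_def by auto
    show "open_segment (p i) (p (Suc i)) \<subseteq> interior (quad_region A B C D)"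
      using mod3_cases[of i] int unfolding p_def by auto
    have sides: "(A,B) \<in> quad_sides A B C D" "(B,C) \<in> quad_sides A B C D" "(D,A) \<in> quad_sides A B C D"
      unfolding quad_sides_def by auto
    have F1seg': "F1 \<in> open_segment D A" using F1seg by (simp add: open_segment_commute)
    show "\<exists>(X, Y)\<in>quad_sides A B C D. p (Suc i) \<in> open_segment X Y \<and>
             (\<exists>c>0. p (Suc (Suc i)) - p (Suc i) = c *\<^sub>R reflect_dir (Y - X) (p (Suc i) - p i))"
      using mod3_cases[of i]
    proof (elim disjE conjE)
      assume "i mod 3 = 0" "Suc i mod 3 = 1" "Suc (Suc i) mod 3 = 2"
      thus ?thesis using sides(2) F2seg R2 unfolding p_def by auto
    next
      assume "i mod 3 = 1" "Suc i mod 3 = 2" "Suc (Suc i) mod 3 = 0"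
      thus ?thesis using sides(3) F1seg' R3 unfolding p_def by auto
    next
      assume "i mod 3 = 2" "Suc i mod 3 = 0" "Suc (Suc i) mod 3 = 1"
      thus ?thesis using sides(1) Hseg R1 unfolding p_def by auto
    qed
  qed
  thus ?thesis unfolding has_periodic_billiard_path_def by blast
qed


lemma trig_facts:
  fixes a1 a2 a3 a4 :: real
  assumes r: "pi/6 < a1" "a1 < pi/3" "pi/6 < a2" "a2 < pi/3" "pi/6 < a3" "a3 < pi/3" "pi/6 < a4" "a4 < pi/3"
    and A: "0 < cos (a1+a2)" and B: "cos (a1+a3) < 0"
  shows "cos (a1+a2) < 1/2" "sin a3 < sin (a1+a3)" "1/2 < sin a4" "0 < sin (a3-a2)" "0 < cos (a3-a2)"
    "0 < sin (a2+a4)"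
proof -
  have pi: "0 < pi" by simp
  show "cos (a1+a2) < 1/2"
    using cos_monotone_0_pi[of "pi/3" "a1+a2"] r cos_60 by linarith
  have "pi/2 < a1 + a3"
  proof (rule ccontr)
    assume "\<not> pi/2 < a1 + a3"
    hence "0 \<le> cos (a1+a3)" using r by (intro cos_ge_zero) linarith+
    thus False using B by linarith
  qed
  hence "sin a3 < sin (pi - (a1+a3))" using r by (intro sin_monotone_2pi) linarith+
  thus "sin a3 < sin (a1+a3)" by simp
  show "1/2 < sin a4" using sin_monotone_2pi[of "pi/6" a4] r sin_30 by linarith
  have "a1 + a2 < pi/2"
  proof (rule ccontr)
    assume h: "\<not> a1 + a2 < pi/2"
    have "cos (a1+a2) \<le> cos (pi/2)" using r h by (intro cos_monotone_0_pi_le) linarith+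
    thus False using A by simp
  qed
  with \<open>pi/2 < a1 + a3\<close> show "0 < sin (a3-a2)" using r by (intro sin_gt_zero) linarith+
  show "0 < cos (a3-a2)" using r by (intro cos_gt_zero_pi) linarith+
  show "0 < sin (a2+a4)" using r by (intro sin_gt_zero) linarith+
qed


lemma sq_root_eq: "(x::real)^2 = y^2 \<Longrightarrow> 0 \<le> x \<Longrightarrow> 0 \<le> y \<Longrightarrow> x = y"
  by (simp add: power2_eq_iff_nonneg)

lemma im_from_re:
  assumes "Re z = cmod z * cos a" "0 \<le> sin a"
  shows "\<bar>Im z\<bar> = cmod z * sin a"
proof -
  have "(Im z)^2 = (cmod z)^2 - (Re z)^2" by (simp add: cmod_power2)
  also have "\<dots> = (cmod z)^2 * (1 - (cos a)^2)" using assms(1)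
    by (simp add: power_mult_distrib algebra_simps)
  also have "\<dots> = (cmod z * sin a)^2" by (simp add: sin_squared_eq power_mult_distrib)
  finally have h: "\<bar>Im z\<bar>^2 = (cmod z * sin a)^2" by simp
  show ?thesis by (rule sq_root_eq[OF h]) (use assms(2) in auto)
qed

lemma bd_facts:
  fixes b d :: complex and a1 a2 a3 a4 :: real
  assumes r: "pi/6 < a1" "a1 < pi/3" "pi/6 < a2" "a2 < pi/3" "pi/6 < a3" "a3 < pi/3" "pi/6 < a4" "a4 < pi/3"
    and hb1: "Re b = cmod b * cos a1" and hb3: "Re (1-b) = cmod (1-b) * cos a3"
    and hd2: "Re d = cmod d * cos a2" and hd4: "Re (1-d) = cmod (1-d) * cos a4"
    and yb: "Im b < 0" and yd: "0 < Im d" and iA: "0 < inner d b" and iB: "0 < inner (-b) (1-b)"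
  shows "0 < cross2 b 1" "0 < cross2 b d" "0 < cross2 (1-b) (d-b)" "0 < cross2 (1-b) (-b)"
    "0 < cross2 (d-1) (-1)" "0 < cross2 (d-1) (b-1)" "0 < cross2 (-d) (b-d)" "0 < cross2 (-d) (1-d)"
    "0 < inner (-1) (b-1)" "0 < inner (b-d) (-d)"
    "0 < cross2 b (1-b) / cross2 d (1-b)" "0 < cross2 (-b) d / cross2 (1-b) d" "0 < inner d (1-b)"
proof -
  define rb where "rb = cmod b"
  define sb where "sb = cmod (1-b)"
  define rd where "rd = cmod d"
  define sd where "sd = cmod (1-d)"
  define c1 where "c1 = cos a1"
  define c2 where "c2 = cos a2"
  define c3 where "c3 = cos a3"
  define c4 where "c4 = cos a4"
  define s1 where "s1 = sin a1"
  define s2 where "s2 = sin a2"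
  define s3 where "s3 = sin a3"
  define s4 where "s4 = sin a4"
  have sp: "0 < s1" "0 < s2" "0 < s3" "0 < s4" unfolding s1_def s2_def s3_def s4_def
    using r by (intro sin_gt_zero; linarith)+
  have cp: "0 < c1" "0 < c2" "0 < c3" "0 < c4" unfolding c1_def c2_def c3_def c4_def
    using r by (intro cos_gt_zero; linarith)+
  have Ib: "Im b = - rb * s1" using im_from_re[OF hb1] sp yb unfolding rb_def s1_def by auto
  have Ib3: "Im b = - sb * s3" using im_from_re[OF hb3] sp yb unfolding sb_def s3_def by auto
  have Id: "Im d = rd * s2" using im_from_re[OF hd2] sp yd unfolding rd_def s2_def by auto
  have Id4: "Im d = sd * s4" using im_from_re[OF hd4] sp yd unfolding sd_def s4_def by auto
  have Rb: "Re b = rb * c1" "1 - Re b = sb * c3" using hb1 hb3 unfolding rb_def sb_def c1_def c3_def by auto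
  have Rd: "Re d = rd * c2" "1 - Re d = sd * c4" using hd2 hd4 unfolding rd_def sd_def c2_def c4_def by auto
  have pos: "0 < rb" "0 < sb" "0 < rd" "0 < sd"
    using Ib Ib3 Id Id4 yb yd unfolding rb_def sb_def rd_def sd_def by auto
  have K: "inner d b = rb * rd * cos (a1+a2)"
    unfolding inner_comp cos_add Rb Rd Ib Id c1_def c2_def s1_def s2_def by (simp add: algebra_simps)
  have KA: "0 < cos (a1+a2)" using iA mult_pos_pos[OF pos(1) pos(3)] unfolding K by (simp add: zero_less_mult_iff)
  have L: "inner (-b) (1-b) = - (rb * sb * cos (a1+a3))"
  proof -
    have e: "inner (-b) (1-b) = - Re b * (1 - Re b) + Im b * Im b" by (simp add: inner_comp)
    have f: "Im b * Im b = (rb * s1) * (sb * s3)"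
    proof -
      have "Im b * Im b = (- rb * s1) * (- sb * s3)" using Ib Ib3 by (rule arg_cong2[where f=times])
      thus ?thesis by simp
    qed
    have g: "- Re b * (1 - Re b) = - (rb * c1) * (sb * c3)" using Rb(1) Rb(2) by (rule arg_cong2[where f="\<lambda>x y. - x * y"])
    show ?thesis unfolding e f g cos_add c1_def c3_def s1_def s3_def by (simp add: algebra_simps)
  qed
  have KB: "cos (a1+a3) < 0"
  proof -
    have h1: "(rb * sb) * cos (a1+a3) < 0" using iB unfolding L by simp
    have h2: "0 < rb * sb" using pos by simp
    show ?thesis using h1 pos by (auto simp: mult_less_0_iff)
  qed
  note T = trig_facts[OF r KA KB]
  show "0 < cross2 b 1" unfolding cross2_comp using yb by simp
  show cbd: "0 < cross2 b d" unfolding cross2_comp Rb Rd Ib Id using pos sp cp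
    by (simp add: algebra_simps add_pos_pos)
  have e1: "1 - b = Complex (sb * c3) (sb * s3)" using Rb Ib3 by (simp add: complex_eq_iff)
  have e2: "1 - d = Complex (sd * c4) (-(sd * s4))" using Rd Id4 by (simp add: complex_eq_iff)
  have "cross2 (1-b) (d-b) = - cross2 (1-b) (1-d)" by (simp add: cross2_comp algebra_simps)
  thus "0 < cross2 (1-b) (d-b)" unfolding e1 e2 cross2_comp using pos sp cp by (simp add: add_pos_pos)
  have "cross2 (1-b) (-b) = Im (1-b)" by (simp add: cross2_comp algebra_simps)
  thus "0 < cross2 (1-b) (-b)" using yb by simp
  have "cross2 (d-1) (-1) = Im d" by (simp add: cross2_comp algebra_simps)
  thus "0 < cross2 (d-1) (-1)" using yd by simp
  have "cross2 (d-1) (b-1) = cross2 (1-d) (1-b)" by (simp add: cross2_comp algebra_simps)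
  thus "0 < cross2 (d-1) (b-1)" unfolding e1 e2 cross2_comp using pos sp cp by (simp add: add_pos_pos)
  have "cross2 (-d) (b-d) = cross2 b d" by (simp add: cross2_comp algebra_simps)
  thus "0 < cross2 (-d) (b-d)" using cbd by simp
  have "cross2 (-d) (1-d) = Im d" by (simp add: cross2_comp algebra_simps)
  thus "0 < cross2 (-d) (1-d)" using yd by simp
  show "0 < inner (-1) (b-1)" using Rb pos cp by (simp add: inner_comp)
  have rb1: "rb * sin (a1+a3) = s3"
  proof -
    have "rb * sin (a1+a3) = rb * s1 * c3 + rb * c1 * s3" unfolding sin_add s1_def c3_def c1_def s3_def
      by (simp add: algebra_simps)
    also have "\<dots> = s3 * (sb * c3 + rb * c1)" using Ib Ib3 by (simp add: algebra_simps)
    also have "sb * c3 + rb * c1 = 1" using Rb by simp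
    finally show ?thesis by simp
  qed
  have rd1: "rd * sin (a2+a4) = s4"
  proof -
    have "rd * sin (a2+a4) = rd * s2 * c4 + rd * c2 * s4" unfolding sin_add s2_def c4_def c2_def s4_def
      by (simp add: algebra_simps)
    also have "\<dots> = s4 * (sd * c4 + rd * c2)" using Id Id4 by (simp add: algebra_simps)
    also have "sd * c4 + rd * c2 = 1" using Rd by simp
    finally show ?thesis by simp
  qed
  have rblt: "rb < 1"
  proof -
    have "rb * sin (a1+a3) < 1 * sin (a1+a3)" using rb1 T(2) unfolding s3_def by simp
    moreover have "0 < sin (a1+a3)" using T(2) sp unfolding s3_def by linarith
    ultimately show ?thesis by (simp add: mult_less_cancel_right)
  qed
  have rdgt: "1/2 < rd"
  proof -
    have "rd * sin (a2+a4) \<le> rd * 1" using pos by (intro mult_left_mono) auto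
    thus ?thesis using rd1 T(3) unfolding s4_def by linarith
  qed
  have "rb * cos (a1+a2) < 1/2"
  proof -
    have "rb * cos (a1+a2) \<le> 1 * cos (a1+a2)" using rblt KA by (intro mult_right_mono) auto
    thus ?thesis using T(1) by linarith
  qed
  hence "0 < rd * (rd - rb * cos (a1+a2))" using rdgt pos by (intro mult_pos_pos) auto
  moreover have "inner (b-d) (-d) = rd * rd - inner d b"
  proof -
    have "inner (b-d) (-d) = ((Re d)^2 + (Im d)^2) - inner d b" by (simp add: inner_comp algebra_simps power2_eq_square)
    hence "inner (b-d) (-d) = (cmod d)^2 - inner d b" by (simp only: cmod_power2)
    thus ?thesis unfolding rd_def by (simp add: power2_eq_square)
  qed
  ultimately show "0 < inner (b-d) (-d)" unfolding K by (simp add: algebra_simps)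
  have S: "cross2 d (1-b) = rd * sb * sin (a3 - a2)"
    unfolding cross2_comp e1 sin_diff using Rd Id by (simp add: c2_def s2_def c3_def s3_def algebra_simps)
  have Sp: "0 < cross2 d (1-b)" unfolding S using pos T(4) by simp
  have "cross2 b (1-b) = rb * s1" using Ib by (simp add: cross2_comp algebra_simps)
  hence "0 < cross2 b (1-b)" using pos sp by simp
  thus "0 < cross2 b (1-b) / cross2 d (1-b)" using Sp by simp
  have "cross2 (-b) d = - cross2 b d" "cross2 (1-b) d = - cross2 d (1-b)" by (simp_all add: cross2_comp algebra_simps)
  thus "0 < cross2 (-b) d / cross2 (1-b) d" using Sp cbd by (simp add: divide_neg_neg)
  have "inner d (1-b) = rd * sb * cos (a3 - a2)"
    unfolding inner_comp e1 cos_diff using Rd Id by (simp add: c2_def s2_def c3_def s3_def algebra_simps)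
  thus "0 < inner d (1-b)" using pos T(5) by simp
qed


lemma vangle_scale: "w \<noteq> 0 \<Longrightarrow> vangle (w*x) (w*y) = vangle x y"
proof -
  assume w: "w \<noteq> 0"
  have "inner (w*x) (w*y) / (norm (w*x) * norm (w*y)) = ((cmod w)^2 * inner x y) / ((cmod w)^2 * (norm x * norm y))"
  proof -
    have "norm (w*x) * norm (w*y) = (cmod w)^2 * (norm x * norm y)" by (simp add: norm_mult power2_eq_square mult_ac)
    thus ?thesis by (simp only: inner_scale)
  qed
  also have "\<dots> = inner x y / (norm x * norm y)" using w by simp
  finally show ?thesis unfolding vangle_def by simp
qed

lemma vangle_ratio_bound: "\<bar>inner x y / (norm x * norm y)\<bar> \<le> (1::real)" for x y :: complex
proof (cases "norm x * norm y = 0")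
  case True thus ?thesis by (simp only: True division_ring_divide_zero abs_zero)
next
  case False
  hence p: "0 < norm x * norm y" by simp
  have "\<bar>inner x y / (norm x * norm y)\<bar> = \<bar>inner x y\<bar> / (norm x * norm y)" using p by (simp add: abs_divide)
  also have "\<dots> \<le> 1" using Cauchy_Schwarz_ineq2[of x y] p by (simp add: divide_le_eq_1)
  finally show ?thesis .
qed

lemma vangle_cos:
  assumes "vangle x y = a" "a \<noteq> pi/2"
  shows "inner x y = norm x * norm y * cos a"
proof -
  define v where "v = inner x y / (norm x * norm y)"
  have v: "-1 \<le> v" "v \<le> 1" using vangle_ratio_bound[of x y] unfolding v_def by linarith+
  have "cos a = v" using assms(1) v unfolding vangle_def v_def[symmetric] by auto
  moreover have "norm x * norm y \<noteq> 0"
  proof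
    assume "norm x * norm y = 0"
    hence "v = 0" unfolding v_def by simp
    hence "a = pi/2" using assms(1) unfolding vangle_def v_def[symmetric] by simp
    thus False using assms(2) by simp
  qed
  ultimately show ?thesis unfolding v_def by simp
qed

lemma vangle_acute:
  assumes "vangle x y < pi/2"
  shows "0 < inner x y"
proof (rule ccontr)
  assume "\<not> 0 < inner x y"
  define v where "v = inner x y / (norm x * norm y)"
  have v: "-1 \<le> v" "v \<le> 1" using vangle_ratio_bound[of x y] unfolding v_def by linarith+
  have "v \<le> 0" unfolding v_def using \<open>\<not> 0 < inner x y\<close> by (simp add: divide_nonpos_nonneg)
  hence "arccos 0 \<le> arccos v" using v by (intro arccos_le_arccos) auto
  thus False using assms unfolding vangle_def v_def[symmetric] by simp
qed

lemma cross2_cnj: "cross2 (cnj x) (cnj y) = - cross2 x y"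
  by (simp add: cross2_comp)

lemma bd_gen:
  fixes b d :: complex and a1 a2 a3 a4 :: real
  assumes r: "pi/6 < a1" "a1 < pi/3" "pi/6 < a2" "a2 < pi/3" "pi/6 < a3" "a3 < pi/3" "pi/6 < a4" "a4 < pi/3"
    and hb1: "Re b = cmod b * cos a1" and hb3: "Re (1-b) = cmod (1-b) * cos a3"
    and hd2: "Re d = cmod d * cos a2" and hd4: "Re (1-d) = cmod (1-d) * cos a4"
    and yy: "Im b * Im d < 0" and iA: "0 < inner d b" and iB: "0 < inner (-b) (1-b)"
  shows "\<exists>\<sigma>. 0 < \<sigma> * cross2 b 1 \<and> 0 < \<sigma> * cross2 b d \<and> 0 < \<sigma> * cross2 (1-b) (d-b) \<and>
    0 < \<sigma> * cross2 (1-b) (-b) \<and> 0 < \<sigma> * cross2 (d-1) (-1) \<and> 0 < \<sigma> * cross2 (d-1) (b-1) \<and>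
    0 < \<sigma> * cross2 (-d) (b-d) \<and> 0 < \<sigma> * cross2 (-d) (1-d) \<and>
    0 < inner (-1) (b-1) \<and> 0 < inner (b-d) (-d) \<and>
    0 < cross2 b (1-b) / cross2 d (1-b) \<and> 0 < cross2 (-b) d / cross2 (1-b) d \<and> 0 < inner d (1-b)"
proof (cases "Im b < 0")
  case True
  hence "0 < Im d" using yy by (auto simp: mult_less_0_iff)
  from bd_facts[OF r hb1 hb3 hd2 hd4 True this iA iB] show ?thesis
    by (intro exI[of _ 1]) simp
next
  case False
  hence yb: "0 < Im b" using yy by (cases "Im b = 0") auto
  hence yd: "Im d < 0" using yy by (auto simp: mult_less_0_iff)
  have h1: "Re (cnj b) = cmod (cnj b) * cos a1" using hb1 by simp
  have h3: "Re (1 - cnj b) = cmod (1 - cnj b) * cos a3"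
  proof -
    have "cmod (1 - cnj b) = cmod (1 - b)" by (metis complex_mod_cnj complex_cnj_diff complex_cnj_one)
    moreover have "Re (1 - cnj b) = Re (1 - b)" by simp
    ultimately show ?thesis using hb3 by simp
  qed
  have h2: "Re (cnj d) = cmod (cnj d) * cos a2" using hd2 by simp
  have h4: "Re (1 - cnj d) = cmod (1 - cnj d) * cos a4"
  proof -
    have "cmod (1 - cnj d) = cmod (1 - d)" by (metis complex_mod_cnj complex_cnj_diff complex_cnj_one)
    moreover have "Re (1 - cnj d) = Re (1 - d)" by simp
    ultimately show ?thesis using hd4 by simp
  qed
  have y1: "Im (cnj b) < 0" "0 < Im (cnj d)" using yb yd by simp_all
  have i1: "0 < inner (cnj d) (cnj b)" using iA by (simp add: inner_comp)
  have i2: "0 < inner (- cnj b) (1 - cnj b)" using iB by (simp add: inner_comp)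
  note F = bd_facts[OF r h1 h3 h2 h4 y1 i1 i2]
  have g1: "0 < -1 * cross2 b 1" using F(1) by (simp add: cross2_comp)
  have g2: "0 < -1 * cross2 b d" using F(2) by (simp add: cross2_comp)
  have g3: "0 < -1 * cross2 (1-b) (d-b)" using F(3) by (simp add: cross2_comp algebra_simps)
  have g4: "0 < -1 * cross2 (1-b) (-b)" using F(4) by (simp add: cross2_comp algebra_simps)
  have g5: "0 < -1 * cross2 (d-1) (-1)" using F(5) by (simp add: cross2_comp algebra_simps)
  have g6: "0 < -1 * cross2 (d-1) (b-1)" using F(6) by (simp add: cross2_comp algebra_simps)
  have g7: "0 < -1 * cross2 (-d) (b-d)" using F(7) by (simp add: cross2_comp algebra_simps)
  have g8: "0 < -1 * cross2 (-d) (1-d)" using F(8) by (simp add: cross2_comp algebra_simps)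
  have g9: "0 < inner (-1) (b-1)" using F(9) by (simp add: inner_comp algebra_simps)
  have g10: "0 < inner (b-d) (-d)" using F(10) by (simp add: inner_comp algebra_simps)
  have g13: "0 < inner d (1-b)" using F(13) by (simp add: inner_comp algebra_simps)
  have q1: "cross2 (cnj b) (1 - cnj b) = - cross2 b (1-b)" "cross2 (cnj d) (1 - cnj b) = - cross2 d (1-b)"
    "cross2 (- cnj b) (cnj d) = - cross2 (-b) d" "cross2 (1 - cnj b) (cnj d) = - cross2 (1-b) d"
    by (simp_all add: cross2_comp algebra_simps)
  have g11: "0 < cross2 b (1-b) / cross2 d (1-b)" using F(11) unfolding q1 by simp
  have g12: "0 < cross2 (-b) d / cross2 (1-b) d" using F(12) unfolding q1 by simp
  show ?thesis using g1 g2 g3 g4 g5 g6 g7 g8 g9 g10 g11 g12 g13 by blast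
qed


lemma sc_cross: "u = w*x \<Longrightarrow> v = w*y \<Longrightarrow> w \<noteq> 0 \<Longrightarrow> 0 < \<sigma> * cross2 x y \<Longrightarrow> 0 < \<sigma> * cross2 u v"
  for u v w x y :: complex
proof -
  assume h: "u = w*x" "v = w*y" "w \<noteq> 0" "0 < \<sigma> * cross2 x y"
  have "\<sigma> * cross2 u v = (cmod w)^2 * (\<sigma> * cross2 x y)" unfolding h(1,2) cross_scale by (simp only: mult.left_commute)
  moreover have "0 < (cmod w)^2" using h(3) by simp
  ultimately show ?thesis using h(4) by (simp only: mult_pos_pos)
qed

lemma sc_inner: "u = w*x \<Longrightarrow> v = w*y \<Longrightarrow> w \<noteq> 0 \<Longrightarrow> 0 < inner x y \<Longrightarrow> 0 < inner u v"
  for u v w x y :: complex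
proof -
  assume h: "u = w*x" "v = w*y" "w \<noteq> 0" "0 < inner x y"
  have "inner u v = (cmod w)^2 * inner x y" unfolding h(1,2) inner_scale by simp
  thus ?thesis using h(3,4) by simp
qed

lemma sc_ratio: "u1 = w*x1 \<Longrightarrow> v1 = w*y1 \<Longrightarrow> u2 = w*x2 \<Longrightarrow> v2 = w*y2 \<Longrightarrow> w \<noteq> 0 \<Longrightarrow>
  0 < cross2 x1 y1 / cross2 x2 y2 \<Longrightarrow> 0 < cross2 u1 v1 / cross2 u2 v2"
  for u1 v1 u2 v2 w x1 y1 x2 y2 :: complex
proof -
  assume h: "u1 = w*x1" "v1 = w*y1" "u2 = w*x2" "v2 = w*y2" "w \<noteq> 0" "0 < cross2 x1 y1 / cross2 x2 y2"
  have "cross2 u1 v1 / cross2 u2 v2 = ((cmod w)^2 * cross2 x1 y1) / ((cmod w)^2 * cross2 x2 y2)"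
    unfolding h(1-4) cross_scale by simp
  also have "\<dots> = cross2 x1 y1 / cross2 x2 y2" using h(5) by simp
  finally show ?thesis using h(6) by simp
qed

lemma range_of: "\<bar>a - pi/4\<bar> < pi/12 \<Longrightarrow> pi/6 < a \<and> a < pi/3"
proof -
  assume h: "\<bar>a - pi/4\<bar> < pi/12"
  hence "a - pi/4 < pi/12 \<and> - (a - pi/4) < pi/12" by (simp only: abs_less_iff)
  thus ?thesis by linarith
qed

lemma main_AB:
  fixes A B C D :: complex
  assumes ns: "near_square (pi/12) A B C D"
    and aA: "vangle (D-A) (B-A) < pi/2" and aB: "vangle (A-B) (C-B) < pi/2"
  shows "has_periodic_billiard_path A B C D"
proof -
  have ds: "cross2 (C-A) (B-A) * cross2 (C-A) (D-A) < 0"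
    using ns unfolding near_square_def diag_splits_def by simp
  define a1 where "a1 = vangle (B-A) (C-A)"
  define a2 where "a2 = vangle (D-A) (C-A)"
  define a3 where "a3 = vangle (B-C) (A-C)"
  define a4 where "a4 = vangle (D-C) (A-C)"
  have pr: "\<bar>a1 - pi/4\<bar> < pi/12" "\<bar>a2 - pi/4\<bar> < pi/12" "\<bar>a3 - pi/4\<bar> < pi/12" "\<bar>a4 - pi/4\<bar> < pi/12"
    using ns unfolding near_square_def quad_params_def a1_def a2_def a3_def a4_def by auto
  have r: "pi/6 < a1" "a1 < pi/3" "pi/6 < a2" "a2 < pi/3" "pi/6 < a3" "a3 < pi/3" "pi/6 < a4" "a4 < pi/3"
    using range_of[OF pr(1)] range_of[OF pr(2)] range_of[OF pr(3)] range_of[OF pr(4)] by auto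
  have rn: "a1 \<noteq> pi/2" "a2 \<noteq> pi/2" "a3 \<noteq> pi/2" "a4 \<noteq> pi/2" using r by (auto simp: field_simps)
  define w where "w = C - A"
  have w: "w \<noteq> 0" using ds unfolding w_def by (auto simp: cross2_def)
  define b where "b = (B - A) / w"
  define d where "d = (D - A) / w"
  have Bw: "B = A + w*b" and Dw: "D = A + w*d" and Cw: "C = A + w*1"
    unfolding b_def d_def using w unfolding w_def by simp_all
  have V: "B-A = w*b" "C-A = w*1" "D-A = w*d" "C-B = w*(1-b)" "D-B = w*(d-b)" "A-B = w*(-b)"
    "D-C = w*(d-1)" "A-C = w*(-1)" "B-C = w*(b-1)" "A-D = w*(-d)" "B-D = w*(b-d)" "C-D = w*(1-d)"
    by (simp_all add: Bw Dw Cw algebra_simps)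
  have hb1: "Re b = cmod b * cos a1"
  proof -
    have "vangle b 1 = a1" unfolding a1_def V vangle_scale[OF w] ..
    from vangle_cos[OF this rn(1)] show ?thesis by (simp add: inner_comp)
  qed
  have hd2: "Re d = cmod d * cos a2"
  proof -
    have "vangle d 1 = a2" unfolding a2_def V vangle_scale[OF w] ..
    from vangle_cos[OF this rn(2)] show ?thesis by (simp add: inner_comp)
  qed
  have hb3: "Re (1-b) = cmod (1-b) * cos a3"
  proof -
    have "vangle (b-1) (-1) = a3" unfolding a3_def V vangle_scale[OF w] ..
    from vangle_cos[OF this rn(3)] show ?thesis by (simp add: inner_comp norm_minus_commute)
  qed
  have hd4: "Re (1-d) = cmod (1-d) * cos a4"
  proof -
    have "vangle (d-1) (-1) = a4" unfolding a4_def V vangle_scale[OF w] ..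
    from vangle_cos[OF this rn(4)] show ?thesis by (simp add: inner_comp norm_minus_commute)
  qed
  have yy: "Im b * Im d < 0"
  proof -
    have "cross2 (C-A) (B-A) * cross2 (C-A) (D-A) = ((cmod w)^2 * (cmod w)^2) * (Im b * Im d)"
      unfolding V cross_scale by (simp add: cross2_comp algebra_simps)
    with ds have "((cmod w)^2 * (cmod w)^2) * (Im b * Im d) < 0" by simp
    moreover have "0 < (cmod w)^2 * (cmod w)^2" using w by simp
    ultimately show ?thesis by (simp add: mult_less_0_iff)
  qed
  have iA: "0 < inner d b"
    using vangle_acute[of d b] aA unfolding V vangle_scale[OF w] by simp
  have iB: "0 < inner (-b) (1-b)"
    using vangle_acute[of "-b" "1-b"] aB unfolding V vangle_scale[OF w] by simp
  obtain \<sigma> where F: "0 < \<sigma> * cross2 b 1" "0 < \<sigma> * cross2 b d" "0 < \<sigma> * cross2 (1-b) (d-b)"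
    "0 < \<sigma> * cross2 (1-b) (-b)" "0 < \<sigma> * cross2 (d-1) (-1)" "0 < \<sigma> * cross2 (d-1) (b-1)"
    "0 < \<sigma> * cross2 (-d) (b-d)" "0 < \<sigma> * cross2 (-d) (1-d)"
    "0 < inner (-1) (b-1)" "0 < inner (b-d) (-d)"
    "0 < cross2 b (1-b) / cross2 d (1-b)" "0 < cross2 (-b) d / cross2 (1-b) d" "0 < inner d (1-b)"
    using bd_gen[OF r hb1 hb3 hd2 hd4 yy iA iB] by blast
  show ?thesis
  proof (rule orbit[of \<sigma>])
    show "0 < \<sigma> * cross2 (B-A) (C-A)" by (rule sc_cross[OF V(1) V(2) w F(1)])
    show "0 < \<sigma> * cross2 (B-A) (D-A)" by (rule sc_cross[OF V(1) V(3) w F(2)])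
    show "0 < \<sigma> * cross2 (C-B) (D-B)" by (rule sc_cross[OF V(4) V(5) w F(3)])
    show "0 < \<sigma> * cross2 (C-B) (A-B)" by (rule sc_cross[OF V(4) V(6) w F(4)])
    show "0 < \<sigma> * cross2 (D-C) (A-C)" by (rule sc_cross[OF V(7) V(8) w F(5)])
    show "0 < \<sigma> * cross2 (D-C) (B-C)" by (rule sc_cross[OF V(7) V(9) w F(6)])
    show "0 < \<sigma> * cross2 (A-D) (B-D)" by (rule sc_cross[OF V(10) V(11) w F(7)])
    show "0 < \<sigma> * cross2 (A-D) (C-D)" by (rule sc_cross[OF V(10) V(12) w F(8)])
    show "0 < inner (D-A) (B-A)" by (rule sc_inner[OF V(3) V(1) w iA])
    show "0 < inner (A-B) (C-B)" by (rule sc_inner[OF V(6) V(4) w iB])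
    show "0 < inner (A-C) (B-C)" by (rule sc_inner[OF V(8) V(9) w F(9)])
    show "0 < inner (B-D) (A-D)" by (rule sc_inner[OF V(11) V(10) w F(10)])
    show "0 < cross2 (B-A) (C-B) / cross2 (D-A) (C-B)" by (rule sc_ratio[OF V(1) V(4) V(3) V(4) w F(11)])
    show "0 < cross2 (A-B) (D-A) / cross2 (C-B) (D-A)" by (rule sc_ratio[OF V(6) V(3) V(4) V(3) w F(12)])
    show "0 < inner (D-A) (C-B)" by (rule sc_inner[OF V(3) V(4) w F(13)])
  qed
qed


lemma pbp_transfer:
  assumes P: "periodic_billiard_path A' B' C' D' p n"
    and R: "quad_region A' B' C' D' = quad_region A B C D"
    and S: "\<And>X Y. (X,Y) \<in> quad_sides A' B' C' D' \<Longrightarrow> (X,Y) \<in> quad_sides A B C D \<or> (Y,X) \<in> quad_sides A B C D"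
  shows "periodic_billiard_path A B C D p n"
  unfolding periodic_billiard_path_def
proof (intro conjI allI)
  show "0 < n" "p (i + n) = p i" "p i \<noteq> p (Suc i)" for i
    using P unfolding periodic_billiard_path_def by auto
  show "open_segment (p i) (p (Suc i)) \<subseteq> interior (quad_region A B C D)" for i
    using P R unfolding periodic_billiard_path_def by auto
  fix i
  obtain X Y where XY: "(X,Y) \<in> quad_sides A' B' C' D'" "p (Suc i) \<in> open_segment X Y"
    and c: "\<exists>c>0. p (Suc (Suc i)) - p (Suc i) = c *\<^sub>R reflect_dir (Y - X) (p (Suc i) - p i)"
    using P unfolding periodic_billiard_path_def by blast
  have rf: "reflect_dir (X - Y) = reflect_dir (Y - X)"
  proof -
    have "X - Y = (-1) *\<^sub>R (Y - X)" by simp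
    thus ?thesis by (simp only: reflect_smult[of "-1"] fun_eq_iff) simp
  qed
  from S[OF XY(1)] show "\<exists>(X, Y)\<in>quad_sides A B C D. p (Suc i) \<in> open_segment X Y \<and>
          (\<exists>c>0. p (Suc (Suc i)) - p (Suc i) = c *\<^sub>R reflect_dir (Y - X) (p (Suc i) - p i))"
  proof
    assume "(X,Y) \<in> quad_sides A B C D"
    thus ?thesis using XY(2) c by blast
  next
    assume "(Y,X) \<in> quad_sides A B C D"
    moreover have "p (Suc i) \<in> open_segment Y X" using XY(2) by (simp add: open_segment_commute)
    moreover have "\<exists>c>0. p (Suc (Suc i)) - p (Suc i) = c *\<^sub>R reflect_dir (X - Y) (p (Suc i) - p i)"
      using c unfolding rf .
    ultimately show ?thesis by (intro bexI[of _ "(Y,X)"]) auto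
  qed
qed

lemma vangle_sym: "vangle x y = vangle y x"
  unfolding vangle_def by (simp add: inner_commute mult.commute)

lemma cross_flip: "cross2 (A-C) (B-C) = - cross2 (C-A) (B-A)"
  by (simp add: cross2_comp algebra_simps)

theorem proposition3p2p1:
  fixes A B C D :: complex
  assumes "near_square (pi / 12) A B C D"
    and "two_adjacent_acute A B C D"
  shows "has_periodic_billiard_path A B C D"
proof -
  have ds: "cross2 (C-A) (B-A) * cross2 (C-A) (D-A) < 0"
    and pr: "\<forall>a\<in>set (quad_params A B C D). \<bar>a - pi/4\<bar> < pi/12"
    using assms(1) unfolding near_square_def diag_splits_def by auto
  have f1: "cross2 (A-C) (B-C) = - cross2 (C-A) (B-A)" "cross2 (A-C) (D-C) = - cross2 (C-A) (D-A)"
    by (simp_all add: cross2_comp algebra_simps)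
  obtain i where i: "i < 4" "quad_angles A B C D ! i < pi/2" "quad_angles A B C D ! ((i+1) mod 4) < pi/2"
    using assms(2) unfolding two_adjacent_acute_def by blast
  have "i = 0 \<or> i = 1 \<or> i = 2 \<or> i = 3" using i(1) by arith
  moreover {
    assume "i = 0"
    hence ?thesis using i main_AB[OF assms(1)] unfolding quad_angles_def by simp
  }
  moreover {
    assume i1: "i = 1"
    have ns: "near_square (pi/12) C B A D"
      unfolding near_square_def diag_splits_def using ds pr f1 by (auto simp: quad_params_def)
    have "has_periodic_billiard_path C B A D"
      using i i1 main_AB[OF ns] unfolding quad_angles_def by (simp add: vangle_sym)
    then obtain p n where "periodic_billiard_path C B A D p n" unfolding has_periodic_billiard_path_def by blast
    hence "periodic_billiard_path A B C D p n"
      by (rule pbp_transfer) (auto simp: quad_region_def quad_sides_def insert_commute)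
    hence ?thesis unfolding has_periodic_billiard_path_def by blast
  }
  moreover {
    assume i2: "i = 2"
    have ns: "near_square (pi/12) C D A B"
      unfolding near_square_def diag_splits_def using ds pr f1 by (auto simp: quad_params_def mult.commute)
    have "has_periodic_billiard_path C D A B"
      using i i2 main_AB[OF ns] unfolding quad_angles_def by (simp add: vangle_sym)
    then obtain p n where "periodic_billiard_path C D A B p n" unfolding has_periodic_billiard_path_def by blast
    hence "periodic_billiard_path A B C D p n"
      by (rule pbp_transfer) (auto simp: quad_region_def quad_sides_def insert_commute)
    hence ?thesis unfolding has_periodic_billiard_path_def by blast
  }
  moreover {
    assume i3: "i = 3"
    have ns: "near_square (pi/12) A D C B"
      unfolding near_square_def diag_splits_def using ds pr by (auto simp: quad_params_def mult.commute)
    have "has_periodic_billiard_path A D C B"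
      using i i3 main_AB[OF ns] unfolding quad_angles_def by (simp add: vangle_sym)
    then obtain p n where "periodic_billiard_path A D C B p n" unfolding has_periodic_billiard_path_def by blast
    hence "periodic_billiard_path A B C D p n"
      by (rule pbp_transfer) (auto simp: quad_region_def quad_sides_def insert_commute)
    hence ?thesis unfolding has_periodic_billiard_path_def by blast
  }
  ultimately show ?thesis by blast
qed

end
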